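(* For $\mu,\nu>0$, $\Gamma\in\mathbb R\setminus\{0\}$ and $a\in\mathbb Q$, $$\big(E_{\mu,\Gamma,a}*G_\nu\big)(q)=\sqrt{\frac{2\pi\mu}{\Gamma^2}}\;G_{\mu+\nu}(q)\;\vartheta\!\begin{bmatrix}0\\ a\end{bmatrix}\!\Big(-\frac{q}{(1+\nu/\mu)\Gamma},\,\frac{2\pi i\nu}{(1+\nu/\mu)\Gamma^2}\Big)\quad\text{for all }q\in\mathbb R.$$
   Context: $G_{\nu}(x)=(2\pi\nu)^{-1/2}e^{-x^2/(2\nu)}$; $(f*g)(x)=\int f(y)g(x-y)\,dy$; $E_{\mu,\Gamma,a}(x)=e^{-x^2/(2\mu)}\sum_{s\in\mathbb Z}\delta(x-(s+a)\Gamma)$ (a Gaussian-weighted Dirac comb), so $(E_{\mu,\Gamma,a}*G_\nu)(q)=\sum_{s}e^{-(s+a)^2\Gamma^2/(2\mu)}G_\nu(q-(s+a)\Gamma)$. Theta function with characteristics: for $a,b\in\mathbb Q$, $z\in\mathbb C$, $\mathrm{Im}\,\tau>0$, $\vartheta\!\begin{bmatrix}a\\ b\end{bmatrix}\!(z,\tau)=\sum_{s\in\mathbb Z}\exp[\pi i\tau(s+a)^2+2\pi i(z+b)(s+a)]$. *)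

theory Defs
  imports "HOL-Analysis.Analysis"
begin

definition gauss :: "real \<Rightarrow> real \<Rightarrow> real" where
  "gauss \<nu> x = exp (- x\<^sup>2 / (2 * \<nu>)) / sqrt (2 * pi * \<nu>)"

text \<open>Convolution of the Gaussian-weighted Dirac comb E_{mu,Gamma,a} with G_nu, evaluated at q:
  sum over s in Z of exp(-(s+a)^2 Gamma^2/(2 mu)) * G_nu(q - (s+a) Gamma).\<close>
definition comb_conv_gauss :: "real \<Rightarrow> real \<Rightarrow> real \<Rightarrow> real \<Rightarrow> real \<Rightarrow> real" where
  "comb_conv_gauss \<mu> \<Gamma> a \<nu> q =
     (\<Sum>\<^sub>\<infinity>s::int. exp (- (of_int s + a)\<^sup>2 * \<Gamma>\<^sup>2 / (2 * \<mu>)) * gauss \<nu> (q - (of_int s + a) * \<Gamma>))"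

definition theta_char :: "real \<Rightarrow> real \<Rightarrow> complex \<Rightarrow> complex \<Rightarrow> complex" where
  "theta_char a b z \<tau> =
     (\<Sum>\<^sub>\<infinity>s::int. exp (pi * \<i> * \<tau> * (of_real (of_int s + a))\<^sup>2
                       + 2 * pi * \<i> * (z + of_real b) * of_real (of_int s + a)))"

end

theory Submission
  imports Defs "HOL-Probability.Characteristic_Functions"
begin

lemma summable_int_nonneg:
  fixes f :: "int \<Rightarrow> real"
  assumes nn: "\<And>n. f n \<ge> 0" and s1: "summable (\<lambda>n. f (int n))" and s2: "summable (\<lambda>n. f (- int n))"
  shows "f summable_on UNIV"
proof -
  have a: "f summable_on (range int)"
    by (subst summable_on_reindex) (use s1 nn in \<open>auto simp: o_def summable_on_UNIV_nonneg_real_iff\<close>)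
  have b: "f summable_on (range (\<lambda>n::nat. - int n))"
    by (subst summable_on_reindex) (use s2 nn in \<open>auto simp: o_def summable_on_UNIV_nonneg_real_iff inj_on_def\<close>)
  have "UNIV = range int \<union> range (\<lambda>n::nat. - int n)"
  proof (intro set_eqI iffI)
    fix x :: int
    show "x \<in> range int \<union> range (\<lambda>n::nat. - int n)"
    proof (cases "x \<ge> 0")
      case True then have "x = int (nat x)" by simp
      then show ?thesis by blast
    next
      case False then have "x = - int (nat (-x))" by simp
      then show ?thesis by blast
    qed
  qed auto
  then show ?thesis using summable_on_union[OF a b] by simp
qed

lemma summable_exp_abs:
  fixes c :: real assumes "c > 0"
  shows "(\<lambda>n::int. exp (- c * \<bar>of_int n\<bar>)) summable_on UNIV"
proof (rule summable_int_nonneg)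
  have "summable (\<lambda>n::nat. exp (- c) ^ n)" using assms by (intro summable_geometric) auto
  moreover have "exp (- c * \<bar>real_of_int (int n)\<bar>) = exp (- c) ^ n" for n
    by (simp add: exp_of_nat_mult[symmetric])
  ultimately show "summable (\<lambda>n. exp (- c * \<bar>real_of_int (int n)\<bar>))" "summable (\<lambda>n. exp (- c * \<bar>real_of_int (- int n)\<bar>))"
    by simp_all
qed auto

lemma interchange:
  fixes f :: "int \<Rightarrow> real \<Rightarrow> complex"
  assumes bnd: "\<And>n x. x \<in> {a..b} \<Longrightarrow> norm (f n x) \<le> M n" and M: "M summable_on UNIV"
    and cont: "\<And>n. continuous_on {a..b} (f n)"
  shows "((\<lambda>n. integral {a..b} (f n)) has_sum integral {a..b} (\<lambda>x. \<Sum>\<^sub>\<infinity>n. f n x)) UNIV"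
    and "continuous_on {a..b} (\<lambda>x. \<Sum>\<^sub>\<infinity>n. f n x)"
proof -
  have u: "uniform_limit {a..b} (\<lambda>X y. \<Sum>n\<in>X. f n y) (\<lambda>y. \<Sum>\<^sub>\<infinity>n. f n y) (finite_subsets_at_top UNIV)"
    using bnd M by (intro Weierstrass_m_test_general) auto
  have c: "\<And>X. continuous_on {a..b} (\<lambda>y. \<Sum>n\<in>X. f n y)"
    using cont by (intro continuous_on_sum) auto
  show "continuous_on {a..b} (\<lambda>x. \<Sum>\<^sub>\<infinity>n. f n x)"
    by (rule uniform_limit_theorem[OF _ u]) (use c in auto)
  obtain I J where I: "\<And>X. ((\<lambda>y. \<Sum>n\<in>X. f n y) has_integral I X) {a..b}"
    and J: "((\<lambda>y. \<Sum>\<^sub>\<infinity>n. f n y) has_integral J) {a..b}" and lim: "(I \<longlongrightarrow> J) (finite_subsets_at_top UNIV)"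
    using uniform_limit_integral[OF u c] by auto
  have "I X = (\<Sum>n\<in>X. integral {a..b} (f n))" if "finite X" for X
  proof -
    have "I X = integral {a..b} (\<lambda>y. \<Sum>n\<in>X. f n y)" using integral_unique[OF I[of X]] by simp
    also have "\<dots> = (\<Sum>n\<in>X. integral {a..b} (f n))"
      by (rule integral_sum) (use cont integrable_continuous_real that in auto)
    finally show ?thesis .
  qed
  then have "((\<lambda>X. \<Sum>n\<in>X. integral {a..b} (f n)) \<longlongrightarrow> J) (finite_subsets_at_top UNIV)"
    using lim by (rule_tac Lim_transform_eventually[OF lim]) (auto intro: eventually_finite_subsets_at_top_weakI)
  then show "((\<lambda>n. integral {a..b} (f n)) has_sum integral {a..b} (\<lambda>x. \<Sum>\<^sub>\<infinity>n. f n x)) UNIV"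
    using J by (simp add: has_sum_def integral_unique)
qed

lemma gauss_shift_bound:
  fixes A x :: real and n :: int
  assumes "A > 0" "\<bar>x\<bar> \<le> 1"
  shows "exp (- A * (x + of_int n)\<^sup>2) \<le> exp (2 * A) * exp (- A * \<bar>of_int n\<bar>)"
proof -
  have "(x + of_int n)\<^sup>2 \<ge> \<bar>x + of_int n\<bar> - 1"
  proof -
    have "(\<bar>x + of_int n\<bar> - 1/2)\<^sup>2 \<ge> 0" by simp
    then show ?thesis by (simp add: power2_eq_square algebra_simps abs_mult_self_eq)
  qed
  moreover have "\<bar>x + of_int n\<bar> \<ge> \<bar>of_int n\<bar> - 1" using assms by linarith
  ultimately have "(x + of_int n)\<^sup>2 \<ge> \<bar>of_int n\<bar> - 2" by linarith
  then have "- A * (x + of_int n)\<^sup>2 \<le> 2 * A + - A * \<bar>of_int n\<bar>"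
  proof -
    have "A * (\<bar>of_int n\<bar> - 2) \<le> A * (x + of_int n)\<^sup>2"
      using \<open>(x + of_int n)\<^sup>2 \<ge> \<bar>of_int n\<bar> - 2\<close> assms by (intro mult_left_mono) auto
    then show ?thesis by (simp add: algebra_simps)
  qed
  then show ?thesis by (simp flip: exp_add)
qed

lemma theta_bound:
  fixes c :: real and k :: int
  assumes "c > 0"
  shows "exp (- c * (of_int k)\<^sup>2) \<le> exp (- c * \<bar>of_int k\<bar>)"
proof -
  have "\<bar>real_of_int k\<bar> \<le> (of_int k)\<^sup>2"
  proof (cases "k = 0")
    case False
    then have "\<bar>real_of_int k\<bar> \<ge> 1" by linarith
    then have "\<bar>real_of_int k\<bar> * 1 \<le> \<bar>real_of_int k\<bar> * \<bar>real_of_int k\<bar>" by (intro mult_left_mono) auto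
    then show ?thesis by (simp add: power2_eq_square abs_mult_self_eq)
  qed simp
  then show ?thesis using assms by simp
qed

lemma gauss_ft:
  fixes A m :: real
  assumes "A > 0"
  defines "h \<equiv> \<lambda>y. complex_of_real (exp (- A * y\<^sup>2)) * exp (2 * pi * \<i> * complex_of_real (m * y))"
  shows "integrable lborel h" "(h has_integral complex_of_real (sqrt (pi/A) * exp (- pi\<^sup>2 * m\<^sup>2 / A))) UNIV"
proof -
  define s where "s = sqrt (2 * A)"
  have s: "s > 0" "s\<^sup>2 = 2 * A" using assms by (auto simp: s_def)
  define t where "t = 2 * pi * m / s"
  define f where "f = (\<lambda>x. std_normal_density x *\<^sub>R iexp (t * x))"
  have fm[measurable]: "f \<in> borel_measurable borel" unfolding f_def by measurable
  have intf: "integrable lborel f"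
  proof (rule Bochner_Integration.integrable_bound)
    show "integrable lborel (std_normal_density)" by (rule integrable_normal_density) simp
    show "f \<in> borel_measurable lborel" by simp
    show "AE x in lborel. norm (f x) \<le> norm (std_normal_density x)"
      by (auto simp: f_def norm_exp_i_times[unfolded of_real_def])
  qed
  have "char std_normal_distribution t = integral\<^sup>L lborel f"
    unfolding char_def f_def by (subst integral_density) (auto simp: normal_density_nonneg)
  then have I1: "integral\<^sup>L lborel f = exp (- t\<^sup>2 / 2)"
    by (simp add: char_std_normal_distribution)
  have I2: "integral\<^sup>L lborel f = s *\<^sub>R integral\<^sup>L lborel (\<lambda>y. f (0 + s * y))"
    using lborel_integral_real_affine[of s f 0] s by simp
  have intf2: "integrable lborel (\<lambda>y. f (0 + s * y))"
    using lborel_integrable_real_affine[OF intf, of s 0] s by simp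
  have hf: "h y = sqrt (2 * pi) *\<^sub>R f (0 + s * y)" for y
  proof -
    have e1: "exp (- A * y\<^sup>2) = exp (- (s * y)\<^sup>2 / 2)" using s by (simp add: power_mult_distrib)
    have e2: "2 * pi * \<i> * complex_of_real (m * y) = \<i> * complex_of_real (t * (s * y))"
      using s by (simp add: t_def field_simps)
    have "h y = complex_of_real (exp (- (s * y)\<^sup>2 / 2)) * exp (\<i> * complex_of_real (t * (s * y)))"
      unfolding h_def e1 e2 by simp
    then show ?thesis
      by (simp add: f_def std_normal_density_def scaleR_conv_of_real)
  qed
  have hfe: "h = (\<lambda>y. sqrt (2 * pi) *\<^sub>R f (0 + s * y))" using hf by auto
  show inth: "integrable lborel h" unfolding hfe using intf2 by simp
  have "integral\<^sup>L lborel h = sqrt (2 * pi) *\<^sub>R integral\<^sup>L lborel (\<lambda>y. f (0 + s * y))"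
    unfolding hfe by simp
  also have "\<dots> = (sqrt (2 * pi) / s) *\<^sub>R complex_of_real (exp (- t\<^sup>2 / 2))"
  proof -
    have J: "s *\<^sub>R integral\<^sup>L lborel (\<lambda>y. f (0 + s * y)) = exp (- t\<^sup>2 / 2)" using I1 I2 by simp
    have "integral\<^sup>L lborel (\<lambda>y. f (0 + s * y)) = (1/s) *\<^sub>R (s *\<^sub>R integral\<^sup>L lborel (\<lambda>y. f (0 + s * y)))"
      using s by simp
    also have "\<dots> = (1/s) *\<^sub>R complex_of_real (exp (- t\<^sup>2 / 2))" using J by (simp only:)
    finally show ?thesis by (simp add: scaleR_conv_of_real)
  qed
  also have "\<dots> = complex_of_real (sqrt (pi/A) * exp (- pi\<^sup>2 * m\<^sup>2 / A))"
  proof -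
    have "sqrt (2 * pi) / s = sqrt (pi / A)" using assms
      by (simp add: s_def real_sqrt_divide[symmetric])
    moreover have "- t\<^sup>2 / 2 = - pi\<^sup>2 * m\<^sup>2 / A"
      using s assms by (simp add: t_def power_divide power_mult_distrib field_simps)
    ultimately show ?thesis by (simp add: scaleR_conv_of_real)
  qed
  finally show "(h has_integral complex_of_real (sqrt (pi/A) * exp (- pi\<^sup>2 * m\<^sup>2 / A))) UNIV"
    using has_integral_integral_lborel[OF inth] by simp
qed

definition ee :: "int \<Rightarrow> real \<Rightarrow> complex" where
  "ee k x = exp (\<i> * complex_of_real (2 * pi * of_int k * x))"

lemma ee_add: "ee k (x + y) = ee k x * ee k y"
  by (simp add: ee_def distrib_left distrib_right exp_add[symmetric] algebra_simps)

lemma ee_mult: "ee k x * ee j x = ee (k + j) x"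
  by (simp add: ee_def exp_add[symmetric] algebra_simps)

lemma ee_int: "ee k (of_int n) = 1"
proof -
  have "\<i> * complex_of_real (2 * pi * of_int k * of_int n) = \<i> * (of_int (k * n) * (of_real pi * 2))"
    by simp
  then show ?thesis unfolding ee_def by (simp only: exp_2pi_1_int)
qed

lemma ee_zero [simp]: "ee 0 x = 1" by (simp add: ee_def)

lemma norm_ee [simp]: "norm (ee k x) = 1"
  unfolding ee_def by (rule norm_exp_i_times)

lemma cnj_ee: "cnj (ee k x) = ee (- k) x"
  unfolding ee_def exp_cnj by simp

lemma continuous_on_ee [continuous_intros]: "continuous_on S (ee k)"
  unfolding ee_def by (intro continuous_intros)

lemma ee_periodic: "ee k (x + of_int n) = ee k x"
  by (simp add: ee_add ee_int)

lemma integral_ee: "integral {0..1} (ee k) = (if k = 0 then 1 else 0)"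
proof (cases "k = 0")
  case False
  define c where "c = \<i> * complex_of_real (2 * pi * of_int k)"
  have c0: "c \<noteq> 0" using False by (simp add: c_def)
  have eq: "ee k x = exp (c * complex_of_real x)" for x by (simp add: ee_def c_def algebra_simps)
  have d: "((\<lambda>x. exp (c * complex_of_real x) / c) has_vector_derivative ee k x) (at x within {0..1})" for x
  proof -
    have "((\<lambda>z. exp (c * z) / c) has_field_derivative exp (c * complex_of_real x)) (at (complex_of_real x))"
      using c0 by (auto intro!: derivative_eq_intros)
    then show ?thesis unfolding eq by (rule has_vector_derivative_real_field)
  qed
  have "(ee k has_integral (exp (c * complex_of_real 1) / c - exp (c * complex_of_real 0) / c)) {0..1}"
    by (rule fundamental_theorem_of_calculus) (use d in auto)
  moreover have "exp (c * complex_of_real 1) = 1"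
    using ee_int[of k 1] eq[of 1] by simp
  ultimately show ?thesis using False by (simp add: integral_unique)
next
  case True
  have "ee 0 = (\<lambda>_. 1)" by (auto simp: fun_eq_iff)
  then show ?thesis using True by simp
qed

lemma gauss_shift_bound':
  fixes A x R :: real and n :: int
  assumes "A > 0" "\<bar>x\<bar> \<le> R"
  shows "exp (- A * (x + of_int n)\<^sup>2) \<le> exp (A * (R + 1)) * exp (- A * \<bar>of_int n\<bar>)"
proof -
  have "(x + of_int n)\<^sup>2 \<ge> \<bar>x + of_int n\<bar> - 1"
  proof -
    have "(\<bar>x + of_int n\<bar> - 1/2)\<^sup>2 \<ge> 0" by simp
    then show ?thesis by (simp add: power2_eq_square algebra_simps abs_mult_self_eq)
  qed
  moreover have "\<bar>x + of_int n\<bar> \<ge> \<bar>of_int n\<bar> - R" using assms by linarith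
  ultimately have *: "(x + of_int n)\<^sup>2 \<ge> \<bar>of_int n\<bar> - (R + 1)" by linarith
  have "- A * (x + of_int n)\<^sup>2 \<le> A * (R + 1) + - A * \<bar>of_int n\<bar>"
  proof -
    have "A * (\<bar>of_int n\<bar> - (R + 1)) \<le> A * (x + of_int n)\<^sup>2"
      using * assms by (intro mult_left_mono) auto
    then show ?thesis by (simp add: algebra_simps)
  qed
  then show ?thesis by (simp flip: exp_add)
qed

definition per :: "real \<Rightarrow> real \<Rightarrow> real" where
  "per A x = (\<Sum>\<^sub>\<infinity>n::int. exp (- A * (x + of_int n)\<^sup>2))"

definition beta :: "real \<Rightarrow> int \<Rightarrow> real" where
  "beta A k = sqrt (pi / A) * exp (- pi\<^sup>2 * (of_int k)\<^sup>2 / A)"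

lemma majorant_summable:
  fixes A C :: real
  assumes "A > 0" shows "(\<lambda>n::int. C * exp (- A * \<bar>real_of_int n\<bar>)) summable_on UNIV"
  using summable_exp_abs[OF assms] by (rule summable_on_cmult_right)

lemma per_summable:
  fixes A x :: real
  assumes "A > 0" shows "(\<lambda>n::int. exp (- A * (x + of_int n)\<^sup>2)) summable_on UNIV"
proof (rule summable_on_comparison_test[OF majorant_summable[OF assms]])
  show "exp (- A * (x + of_int n)\<^sup>2) \<le> exp (A * (\<bar>x\<bar> + 1)) * exp (- A * \<bar>of_int n\<bar>)" for n
    using gauss_shift_bound'[OF assms, of x "\<bar>x\<bar>" n] by simp
qed auto

lemma infsum_of_real':
  fixes f :: "'a \<Rightarrow> real"
  assumes "f summable_on S"
  shows "(\<Sum>\<^sub>\<infinity>n\<in>S. complex_of_real (f n)) = complex_of_real (\<Sum>\<^sub>\<infinity>n\<in>S. f n)"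
  using has_sum_of_real[OF has_sum_infsum[OF assms]] by (rule infsumI)

lemma per_cont:
  assumes "A > 0"
  shows "continuous_on {a..b} (\<lambda>x. complex_of_real (per A x))"
proof -
  define R where "R = max \<bar>a\<bar> \<bar>b\<bar>"
  have "continuous_on {a..b} (\<lambda>x. \<Sum>\<^sub>\<infinity>n::int. complex_of_real (exp (- A * (x + of_int n)\<^sup>2)))"
  proof (rule interchange(2))
    show "norm (complex_of_real (exp (- A * (x + of_int n)\<^sup>2))) \<le> exp (A * (R + 1)) * exp (- A * \<bar>of_int n\<bar>)"
      if "x \<in> {a..b}" for n x
    proof -
      have "\<bar>x\<bar> \<le> R" using that by (auto simp: R_def)
      then show ?thesis using gauss_shift_bound'[OF assms, of x R n] by simp
    qed
    show "(\<lambda>n::int. exp (A * (R + 1)) * exp (- A * \<bar>of_int n\<bar>)) summable_on UNIV"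
      by (rule majorant_summable[OF assms])
  qed (intro continuous_intros)
  moreover have "(\<lambda>x. complex_of_real (per A x)) = (\<lambda>x. \<Sum>\<^sub>\<infinity>n::int. complex_of_real (exp (- A * (x + of_int n)\<^sup>2)))"
    by (intro ext) (simp only: per_def infsum_of_real'[OF per_summable[OF assms]])
  ultimately show ?thesis by (simp only:)
qed

lemma sum_integrals:
  fixes h :: "real \<Rightarrow> complex"
  assumes "continuous_on UNIV h"
  shows "(\<Sum>n\<in>{a..<a + int k}. integral {of_int n..of_int n + 1} h) = integral {of_int a..of_int a + of_nat k} h"
proof (induction k)
  case 0 then show ?case by simp
next
  case (Suc k)
  have "{a..<a + int (Suc k)} = insert (a + int k) {a..<a + int k}" by auto
  then have "(\<Sum>n\<in>{a..<a + int (Suc k)}. integral {of_int n..of_int n + 1} h) =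
     integral {of_int (a + int k)..of_int (a + int k) + 1} h + integral {of_int a..of_int a + of_nat k} h"
    using Suc by simp
  also have "\<dots> = integral {of_int a..of_int a + of_nat (Suc k)} h"
    using Henstock_Kurzweil_Integration.integral_combine[of "of_int a" "of_int a + of_nat k" "of_int a + of_nat (Suc k)" h]
      integrable_continuous_interval[OF continuous_on_subset[OF assms]]
    by (simp add: add.commute add.left_commute)
  finally show ?case .
qed

lemma filterlim_symm_ivl:
  "filterlim (\<lambda>N::nat. {- int N..<int N}) (finite_subsets_at_top UNIV) sequentially"
proof (subst filterlim_finite_subsets_at_top, intro allI impI)
  fix X :: "int set" assume X: "finite X \<and> X \<subseteq> UNIV"
  define B where "B = Max (insert 0 (abs ` X))"
  have B: "\<bar>x\<bar> \<le> B" if "x \<in> X" for x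
    unfolding B_def using X that by (intro Max_ge) auto
  show "\<forall>\<^sub>F N in sequentially. finite {- int N..<int N} \<and> X \<subseteq> {- int N..<int N} \<and> {- int N..<int N} \<subseteq> UNIV"
  proof (rule eventually_sequentiallyI[of "nat B + 1"])
    fix N assume "nat B + 1 \<le> N"
    then show "finite {- int N..<int N} \<and> X \<subseteq> {- int N..<int N} \<and> {- int N..<int N} \<subseteq> UNIV"
      using B by force
  qed
qed

lemma per_coeff:
  fixes A :: real and m :: int
  assumes A: "A > 0"
  shows "integral {0..1} (\<lambda>x. complex_of_real (per A x) * ee m x) = complex_of_real (beta A m)"
proof -
  define h where "h = (\<lambda>y. complex_of_real (exp (- A * y\<^sup>2)) * ee m y)"
  have hcont: "continuous_on UNIV h" unfolding h_def by (intro continuous_intros)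
  have h_alt: "h = (\<lambda>y. complex_of_real (exp (- A * y\<^sup>2)) * exp (2 * pi * \<i> * complex_of_real (of_int m * y)))"
    unfolding h_def ee_def by (intro ext) (simp add: algebra_simps)
  have hint: "integrable lborel h" and hft: "(h has_integral complex_of_real (beta A m)) UNIV"
    using gauss_ft[OF A, of "of_int m"] unfolding h_alt[symmetric] by (auto simp: beta_def)
  have normh: "norm (h x) = exp (- A * x\<^sup>2)" for x unfolding h_def by (simp add: norm_mult)
  define f where "f = (\<lambda>(n::int) x. h (x + of_int n))"
  have f_eq: "f n x = complex_of_real (exp (- A * (x + of_int n)\<^sup>2)) * ee m x" for n x
    by (simp add: f_def h_def ee_periodic)
  have hs: "((\<lambda>n. integral {0..1} (f n)) has_sum integral {0..1} (\<lambda>x. \<Sum>\<^sub>\<infinity>n. f n x)) UNIV"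
  proof (rule interchange(1))
    show "norm (f n x) \<le> exp (A * (1 + 1)) * exp (- A * \<bar>real_of_int n\<bar>)" if "x \<in> {0..1}" for n x
      using gauss_shift_bound'[OF A, of x 1 n] that by (simp add: f_eq norm_mult)
    show "(\<lambda>n::int. exp (A * (1 + 1)) * exp (- A * \<bar>real_of_int n\<bar>)) summable_on UNIV"
      by (rule majorant_summable[OF A])
    show "continuous_on {0..1} (f n)" for n
      unfolding f_def by (intro continuous_on_compose2[OF hcont] continuous_intros) auto
  qed
  have sumf: "(\<Sum>\<^sub>\<infinity>n. f n x) = complex_of_real (per A x) * ee m x" for x
    unfolding f_eq infsum_cmult_left' per_def infsum_of_real'[OF per_summable[OF A]] ..
  have In: "integral {0..1} (f n) = integral {of_int n..of_int n + 1} h" for n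
  proof -
    have "(h has_integral integral {of_int n..of_int n + 1} h) {of_int n..of_int n + 1}"
      by (intro integrable_integral integrable_continuous_interval continuous_on_subset[OF hcont]) auto
    from has_integral_shift_real_ivl[OF this, of "of_int n"]
    show ?thesis unfolding f_def by (simp add: integral_unique)
  qed
  define L where "L = integral {0..1} (\<lambda>x. complex_of_real (per A x) * ee m x)"
  have hs': "((\<lambda>n. integral {of_int n..of_int n + 1} h) has_sum L) UNIV"
    using hs unfolding sumf In L_def .
  have lim1: "(\<lambda>N::nat. \<Sum>n\<in>{- int N..<int N}. integral {of_int n..of_int n + 1} h) \<longlonglongrightarrow> L"
    using filterlim_compose[OF hs'[unfolded has_sum_def] filterlim_symm_ivl] by (simp add: o_def)
  have ps: "(\<Sum>n\<in>{- int N..<int N}. integral {of_int n..of_int n + 1} h) = integral {- real N..real N} h" for N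
  proof -
    have "{- int N..<int N} = {- int N..<- int N + int (2 * N)}" by auto
    then show ?thesis using sum_integrals[OF hcont, of "- int N" "2 * N"] by simp
  qed
  have lim2: "(\<lambda>N::nat. integral {- real N..real N} h) \<longlonglongrightarrow> integral UNIV h"
  proof -
    have gi: "(\<lambda>x. exp (- A * x\<^sup>2)) integrable_on UNIV"
    proof -
      have "integrable lborel (\<lambda>x. norm (h x))" using hint by (rule integrable_norm)
      then show ?thesis unfolding normh by (rule integrable_on_lborel)
    qed
    have "(\<lambda>N::nat. integral UNIV (\<lambda>x. if x \<in> {- real N..real N} then h x else 0)) \<longlonglongrightarrow> integral UNIV h"
    proof (rule dominated_convergence(2)[OF _ gi])
      show "(\<lambda>x. if x \<in> {- real N..real N} then h x else 0) integrable_on UNIV" for N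
        unfolding integrable_restrict_UNIV
        by (intro integrable_continuous_interval continuous_on_subset[OF hcont]) auto
      show "norm (if x \<in> {- real N..real N} then h x else 0) \<le> exp (- A * x\<^sup>2)" for N x
        by (auto simp: normh)
      show "(\<lambda>N. if x \<in> {- real N..real N} then h x else 0) \<longlonglongrightarrow> h x" for x
      proof (rule tendsto_eventually)
        obtain N0 :: nat where "\<bar>x\<bar> \<le> real N0" using real_arch_simple by blast
        then show "\<forall>\<^sub>F N in sequentially. (if x \<in> {- real N..real N} then h x else 0) = h x"
          by (intro eventually_sequentiallyI[of N0]) auto
      qed
    qed
    then show ?thesis by (simp only: integral_restrict_UNIV)
  qed
  have "L = integral UNIV h"
    using LIMSEQ_unique[OF lim1[unfolded ps] lim2] .
  then show ?thesis using hft by (simp add: L_def integral_unique)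
qed

definition thet :: "real \<Rightarrow> real \<Rightarrow> complex" where
  "thet A x = (\<Sum>\<^sub>\<infinity>k::int. complex_of_real (beta A k) * ee k x)"

lemma beta_bound:
  assumes A: "A > 0"
  shows "norm (beta A k) \<le> sqrt (pi / A) * exp (- (pi\<^sup>2 / A) * \<bar>real_of_int k\<bar>)"
proof -
  have c: "pi\<^sup>2 / A > 0" using A by simp
  have "exp (- pi\<^sup>2 * (of_int k)\<^sup>2 / A) = exp (- (pi\<^sup>2 / A) * (of_int k)\<^sup>2)" by simp
  also have "\<dots> \<le> exp (- (pi\<^sup>2 / A) * \<bar>real_of_int k\<bar>)" by (rule theta_bound[OF c])
  finally show ?thesis using A by (simp add: beta_def mult_left_mono)
qed

lemma beta_minus: "beta A (- k) = beta A k" by (simp add: beta_def)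

lemma thet_coeff:
  fixes A :: real and m :: int
  assumes A: "A > 0"
  shows "integral {0..1} (\<lambda>x. thet A x * ee m x) = complex_of_real (beta A m)"
proof -
  define f where "f = (\<lambda>(k::int) x. beta A k *\<^sub>R ee (k + m) x)"
  have hs: "((\<lambda>k. integral {0..1} (f k)) has_sum integral {0..1} (\<lambda>x. \<Sum>\<^sub>\<infinity>k. f k x)) UNIV"
  proof (rule interchange(1))
    show "norm (f k x) \<le> sqrt (pi / A) * exp (- (pi\<^sup>2 / A) * \<bar>real_of_int k\<bar>)" for k x
      using beta_bound[OF A, of k] by (simp add: f_def)
    show "(\<lambda>k::int. sqrt (pi / A) * exp (- (pi\<^sup>2 / A) * \<bar>real_of_int k\<bar>)) summable_on UNIV"
      by (rule majorant_summable) (use A in simp)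
    show "continuous_on {0..1} (f k)" for k
      unfolding f_def by (intro continuous_intros)
  qed
  have sumf: "(\<Sum>\<^sub>\<infinity>k. f k x) = thet A x * ee m x" for x
    unfolding f_def thet_def infsum_cmult_left'[symmetric]
    by (intro infsum_cong) (simp add: scaleR_conv_of_real ee_mult[symmetric])
  have intf: "integral {0..1} (f k) = beta A k *\<^sub>R (if k + m = 0 then 1 else 0)" for k
    unfolding f_def integral_cmul integral_ee ..
  have "((\<lambda>k. beta A k *\<^sub>R (if k + m = 0 then (1::complex) else 0)) has_sum beta A (- m) *\<^sub>R 1) UNIV"
  proof (subst has_sum_cong_neutral[where T="{- m}" and g="\<lambda>k. beta A k *\<^sub>R (if k + m = 0 then (1::complex) else 0)"])
    show "((\<lambda>k. beta A k *\<^sub>R (if k + m = 0 then (1::complex) else 0)) has_sum beta A (- m) *\<^sub>R 1) {- m}"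
      by (rule has_sum_finiteI) auto
  qed auto
  then have "((\<lambda>k. integral {0..1} (f k)) has_sum complex_of_real (beta A m)) UNIV"
    unfolding intf by (simp add: beta_minus scaleR_conv_of_real)
  from has_sum_unique[OF hs this] show ?thesis unfolding sumf .
qed

lemma thet_cont:
  assumes A: "A > 0"
  shows "continuous_on {a..b} (thet A)"
proof -
  have "continuous_on {a..b} (\<lambda>x. \<Sum>\<^sub>\<infinity>k::int. complex_of_real (beta A k) * ee k x)"
  proof (rule interchange(2))
    show "norm (complex_of_real (beta A k) * ee k x) \<le> sqrt (pi / A) * exp (- (pi\<^sup>2 / A) * \<bar>real_of_int k\<bar>)" for k x
      using beta_bound[OF A, of k] by (simp add: norm_mult)
    show "(\<lambda>k::int. sqrt (pi / A) * exp (- (pi\<^sup>2 / A) * \<bar>real_of_int k\<bar>)) summable_on UNIV"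
      by (rule majorant_summable) (use A in simp)
  qed (intro continuous_intros)
  then show ?thesis unfolding thet_def[abs_def] .
qed

lemma thet_periodic: "thet A (x + 1) = thet A x"
  unfolding thet_def using ee_periodic[of _ x 1] by simp

lemma per_periodic:
  shows "per A (x + 1) = per A x"
proof -
  define \<phi> where "\<phi> = (\<lambda>n::int. exp (- A * (x + of_int n)\<^sup>2))"
  have r: "range (\<lambda>n::int. n + 1) = UNIV"
    by (metis surj_def add_diff_cancel diff_add_cancel)
  have "per A x = infsum \<phi> (range (\<lambda>n::int. n + 1))" unfolding r per_def \<phi>_def ..
  also have "\<dots> = infsum (\<phi> \<circ> (\<lambda>n::int. n + 1)) UNIV" by (rule infsum_reindex) auto
  also have "\<dots> = per A (x + 1)" unfolding per_def \<phi>_def o_def by (simp add: add.assoc add.commute add.left_commute)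
  finally show ?thesis ..
qed

definition trigrep :: "(complex \<times> int) list \<Rightarrow> real \<Rightarrow> complex" where
  "trigrep L x = (\<Sum>(c,n)\<leftarrow>L. c * ee n x)"

lemma trigrep_Nil [simp]: "trigrep [] x = 0" by (simp add: trigrep_def)
lemma trigrep_Cons [simp]: "trigrep ((c,n) # L) x = c * ee n x + trigrep L x" by (simp add: trigrep_def)
lemma trigrep_append [simp]: "trigrep (L1 @ L2) x = trigrep L1 x + trigrep L2 x" by (simp add: trigrep_def)

lemma trigrep_scale: "trigrep (map (\<lambda>(c,n). (a * c, n)) L) x = a * trigrep L x"
  by (induction L) (auto simp: algebra_simps)

lemma trigrep_mult1: "trigrep (map (\<lambda>(d,k). (c * d, n + k)) L2) x = c * ee n x * trigrep L2 x"
  by (induction L2) (auto simp: algebra_simps ee_mult[symmetric])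

lemma trigrep_mult:
  "trigrep (concat (map (\<lambda>(c,n). map (\<lambda>(d,k). (c * d, n + k)) L2) L1)) x = trigrep L1 x * trigrep L2 x"
proof (induction L1)
  case (Cons a L1)
  obtain c n where a: "a = (c, n)" by (cases a)
  have "concat (map (\<lambda>(c,n). map (\<lambda>(d,k). (c * d, n + k)) L2) (a # L1)) =
    map (\<lambda>(d,k). (c * d, n + k)) L2 @ concat (map (\<lambda>(c,n). map (\<lambda>(d,k). (c * d, n + k)) L2) L1)"
    by (simp add: a)
  then show ?case
    by (simp only: trigrep_append trigrep_mult1 Cons.IH a trigrep_Cons) (simp add: algebra_simps)
qed simp

lemma poly_trig:
  fixes p :: "complex \<Rightarrow> real"
  assumes "real_polynomial_function p"
  shows "\<exists>L. \<forall>x. complex_of_real (p (ee 1 x)) = trigrep L x"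
  using assms
proof induction
  case (linear f)
  interpret bounded_linear f by fact
  define a where "a = complex_of_real (f 1)"
  define b where "b = complex_of_real (f \<i>)"
  have fz: "f z = Re z * f 1 + Im z * f \<i>" for z
  proof -
    have "Re z *\<^sub>R 1 + Im z *\<^sub>R \<i> = z" by (simp add: complex_eq_iff)
    then have "f z = f (Re z *\<^sub>R 1 + Im z *\<^sub>R \<i>)" by simp
    also have "\<dots> = Re z * f 1 + Im z * f \<i>" by (simp add: add scaleR)
    finally show ?thesis .
  qed
  have re: "complex_of_real (Re z) = (z + cnj z) / 2" and im: "complex_of_real (Im z) = (z - cnj z) / (2 * \<i>)" for z
    by (simp_all add: complex_add_cnj complex_diff_cnj field_simps)
  let ?L = "[(a / 2, 1), (a / 2, -1), (b / (2 * \<i>), 1), (- b / (2 * \<i>), -1)]"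
  have "complex_of_real (f (ee 1 x)) = trigrep ?L x" for x
  proof -
    have "complex_of_real (f (ee 1 x)) = complex_of_real (Re (ee 1 x)) * a + complex_of_real (Im (ee 1 x)) * b"
      unfolding fz[of "ee 1 x"] a_def b_def by simp
    also have "\<dots> = (ee 1 x + ee (-1) x) / 2 * a + (ee 1 x - ee (-1) x) / (2 * \<i>) * b"
      unfolding re im cnj_ee by simp
    also have "\<dots> = trigrep ?L x"
      unfolding trigrep_def by (simp add: divide_simps) (simp add: algebra_simps)
    finally show ?thesis .
  qed
  then show ?case by blast
next
  case (const c)
  have "complex_of_real c = trigrep [(complex_of_real c, 0)] x" for x by simp
  then show ?case by blast
next
  case (add f g)
  then obtain L1 L2 where "\<forall>x. complex_of_real (f (ee 1 x)) = trigrep L1 x" "\<forall>x. complex_of_real (g (ee 1 x)) = trigrep L2 x"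
    by blast
  then have "\<forall>x. complex_of_real (f (ee 1 x) + g (ee 1 x)) = trigrep (L1 @ L2) x" by simp
  then show ?case by blast
next
  case (mult f g)
  then obtain L1 L2 where "\<forall>x. complex_of_real (f (ee 1 x)) = trigrep L1 x" "\<forall>x. complex_of_real (g (ee 1 x)) = trigrep L2 x"
    by blast
  then have "\<forall>x. complex_of_real (f (ee 1 x) * g (ee 1 x)) = trigrep (concat (map (\<lambda>(c,n). map (\<lambda>(d,k). (c * d, n + k)) L2) L1)) x"
    by (simp add: trigrep_mult)
  then show ?case by blast
qed

lemma integral_trig:
  fixes D :: "real \<Rightarrow> complex"
  assumes cont: "continuous_on {0..1} D" and coeff: "\<And>m. integral {0..1} (\<lambda>x. D x * ee m x) = 0"
  shows "((\<lambda>x. D x * trigrep L x) has_integral 0) {0..1}"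
proof (induction L)
  case Nil then show ?case by simp
next
  case (Cons a L)
  obtain c n where a: "a = (c, n)" by (cases a)
  have "((\<lambda>x. D x * ee n x) has_integral 0) {0..1}"
  proof -
    have "(\<lambda>x. D x * ee n x) integrable_on {0..1}"
      by (intro integrable_continuous_interval continuous_intros cont)
    then show ?thesis using coeff[of n] by (metis integrable_integral)
  qed
  from has_integral_add[OF has_integral_mult_right[OF this, of c] Cons]
  show ?case by (simp add: a algebra_simps)
qed

lemma periodic_int:
  fixes u :: "real \<Rightarrow> 'a"
  assumes per: "\<And>x. u (x + 1) = u x"
  shows "u (x + of_int n) = u x"
proof -
  have nat: "u (y + of_nat k) = u y" for y k
  proof (induction k)
    case (Suc k)
    have "u (y + of_nat (Suc k)) = u ((y + of_nat k) + 1)" by (simp add: algebra_simps)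
    also have "\<dots> = u (y + of_nat k)" by (rule per)
    also have "\<dots> = u y" by (rule Suc.IH)
    finally show ?case .
  qed simp
  show ?thesis
  proof (cases "n \<ge> 0")
    case True
    then have "of_int n = (of_nat (nat n) :: real)" by simp
    then have "u (x + of_int n) = u (x + of_nat (nat n))" by (simp only:)
    also have "\<dots> = u x" by (rule nat)
    finally show ?thesis .
  next
    case False
    then have "x = (x + of_int n) + of_nat (nat (- n))" by simp
    then have "u x = u ((x + of_int n) + of_nat (nat (- n)))" by (rule arg_cong)
    also have "\<dots> = u (x + of_int n)" by (rule nat)
    finally show ?thesis by (rule sym)
  qed
qed

lemma ee1_eq:
  assumes "ee 1 x = ee 1 y"
  shows "\<exists>n::int. x = y + of_int n"
proof -
  from assms obtain n :: int where
    "\<i> * complex_of_real (2 * pi * of_int 1 * x) = \<i> * complex_of_real (2 * pi * of_int 1 * y) + (of_int (2 * n) * pi) * \<i>"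
    unfolding ee_def exp_eq by blast
  then have "\<i> * complex_of_real (2 * pi * x) = \<i> * complex_of_real (2 * pi * y + 2 * pi * of_int n)"
    by (simp add: algebra_simps)
  then have "complex_of_real (2 * pi * x) = complex_of_real (2 * pi * y + 2 * pi * of_int n)"
    by (simp only: mult_cancel_left complex_i_not_zero simp_thms)
  then have "2 * pi * x = 2 * pi * (y + of_int n)" by (simp only: of_real_eq_iff algebra_simps)
  then have "x = y + of_int n" by simp
  then show ?thesis by blast
qed

lemma ee1_surj:
  assumes "z \<in> sphere 0 1"
  shows "\<exists>x\<in>{0..1}. ee 1 x = z"
proof -
  have z0: "z \<noteq> 0" using assms by auto
  define t where "t = Im (Ln z)"
  have "Re (Ln z) = 0" using assms z0 by (simp add: Re_Ln)
  then have "Ln z = \<i> * complex_of_real t" by (simp add: t_def complex_eq_iff)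
  then have zt: "z = exp (\<i> * complex_of_real t)" using exp_Ln[OF z0] by simp
  define x0 where "x0 = t / (2 * pi)"
  have "ee 1 x0 = z" unfolding zt ee_def x0_def by simp
  define x where "x = x0 + of_int (- floor x0)"
  have "ee 1 x = z" unfolding x_def ee_periodic by fact
  moreover have "x \<in> {0..1}" unfolding x_def by (simp add: floor_le_iff) linarith
  ultimately show ?thesis by blast
qed

lemma circle_fun:
  fixes u :: "real \<Rightarrow> real"
  assumes cont: "continuous_on {0..1} u" and per: "\<And>x. u (x + 1) = u x"
  obtains f where "continuous_on (sphere 0 1) f" "\<And>x. f (ee 1 x) = u x"
proof -
  define f where "f z = u (SOME x. ee 1 x = z)" for z
  have fe: "f (ee 1 x) = u x" for x
  proof -
    have "ee 1 (SOME y. ee 1 y = ee 1 x) = ee 1 x" by (rule someI) simp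
    then obtain n where "(SOME y. ee 1 y = ee 1 x) = x + of_int n" using ee1_eq by blast
    then show ?thesis unfolding f_def using periodic_int[of u, OF per] by simp
  qed
  have "continuous_on (sphere 0 1) f"
  proof (subst continuous_on_closed_vimage, (simp; fail), intro allI impI)
    fix B :: "real set" assume B: "closed B"
    have eq: "f -` B \<inter> sphere 0 1 = ee 1 ` ({0..1} \<inter> u -` B)"
    proof (intro set_eqI iffI)
      fix z assume z: "z \<in> f -` B \<inter> sphere 0 1"
      then obtain x where "x \<in> {0..1}" "ee 1 x = z" using ee1_surj by blast
      then show "z \<in> ee 1 ` ({0..1} \<inter> u -` B)" using z fe by auto
    next
      fix z assume "z \<in> ee 1 ` ({0..1} \<inter> u -` B)"
      then show "z \<in> f -` B \<inter> sphere 0 1" using fe by auto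
    qed
    have "closed ({0..1} \<inter> u -` B)" by (rule continuous_closed_preimage[OF cont]) (use B in auto)
    from compact_Int_closed[OF compact_Icc this, of 0 1]
    have "compact ({0..1} \<inter> u -` B)" by (simp add: Int_absorb1 Int_assoc[symmetric])
    then have "compact (ee 1 ` ({0..1} \<inter> u -` B))"
      by (rule compact_continuous_image[rotated]) (intro continuous_intros)
    then show "closed (f -` B \<inter> sphere 0 1)" unfolding eq by (rule compact_imp_closed)
  qed
  then show ?thesis by (rule that) (rule fe)
qed

lemma fourier_unique:
  fixes D :: "real \<Rightarrow> complex"
  assumes cont: "continuous_on {0..1} D" and per: "\<And>x. D (x + 1) = D x"
    and coeff: "\<And>m. integral {0..1} (\<lambda>x. D x * ee m x) = 0"
  shows "D x = 0"
proof -
  obtain fr where fr: "continuous_on (sphere 0 1) fr" "\<And>x. fr (ee 1 x) = Re (D x)"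
    using circle_fun[of "\<lambda>x. Re (D x)"] cont per by (auto intro: continuous_intros)
  obtain fi where fi: "continuous_on (sphere 0 1) fi" "\<And>x. fi (ee 1 x) = Im (D x)"
    using circle_fun[of "\<lambda>x. Im (D x)"] cont per by (auto intro: continuous_intros)
  have "bounded (D ` {0..1})" by (intro compact_imp_bounded compact_continuous_image cont) auto
  then obtain B where B: "B > 0" "\<And>x. x \<in> {0..1} \<Longrightarrow> norm (D x) \<le> B"
    unfolding bounded_pos by auto
  define g where "g x = (cmod (D x))\<^sup>2" for x
  have gcont: "continuous_on {0..1} g" unfolding g_def by (intro continuous_intros cont)
  have gint: "(g has_integral integral {0..1} g) {0..1}"
    by (intro integrable_integral integrable_continuous_interval gcont)
  have key: "integral {0..1} g \<le> 2 * B * e" if e: "e > 0" for e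
  proof -
    obtain p where p: "real_polynomial_function p" "\<And>z. z \<in> sphere 0 1 \<Longrightarrow> \<bar>fr z - p z\<bar> < e"
      using Stone_Weierstrass_real_polynomial_function[OF compact_sphere fr(1) e] by blast
    obtain q where q: "real_polynomial_function q" "\<And>z. z \<in> sphere 0 1 \<Longrightarrow> \<bar>fi z - q z\<bar> < e"
      using Stone_Weierstrass_real_polynomial_function[OF compact_sphere fi(1) e] by blast
    obtain Lp where Lp: "\<And>x. complex_of_real (p (ee 1 x)) = trigrep Lp x" using poly_trig[OF p(1)] by blast
    obtain Lq where Lq: "\<And>x. complex_of_real (q (ee 1 x)) = trigrep Lq x" using poly_trig[OF q(1)] by blast
    define P where "P x = trigrep (Lp @ map (\<lambda>(c,n). (- \<i> * c, n)) Lq) x" for x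
    have P: "P x = complex_of_real (p (ee 1 x)) - \<i> * complex_of_real (q (ee 1 x))" for x
      unfolding P_def trigrep_append trigrep_scale Lp Lq by simp
    have hP: "((\<lambda>x. D x * P x) has_integral 0) {0..1}"
      unfolding P_def by (rule integral_trig[OF cont coeff])
    have sph: "ee 1 x \<in> sphere 0 1" for x by simp
    have close: "norm (D x * (cnj (D x) - P x)) \<le> B * (2 * e)" if x: "x \<in> {0..1}" for x
    proof -
      have "cnj (D x) - P x = complex_of_real (fr (ee 1 x) - p (ee 1 x)) - \<i> * complex_of_real (fi (ee 1 x) - q (ee 1 x))"
        unfolding P fr(2) fi(2) by (simp add: complex_eq_iff)
      then have "norm (cnj (D x) - P x) \<le> \<bar>fr (ee 1 x) - p (ee 1 x)\<bar> + \<bar>fi (ee 1 x) - q (ee 1 x)\<bar>"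
        by (metis norm_triangle_ineq4 norm_mult norm_ii mult_1 norm_of_real)
      also have "\<dots> \<le> 2 * e" using p(2)[OF sph[of x]] q(2)[OF sph[of x]] by linarith
      finally have "norm (cnj (D x) - P x) \<le> 2 * e" .
      then show ?thesis unfolding norm_mult using B(2)[OF x] B(1) e
        by (intro mult_mono) auto
    qed
    have pc: "continuous_on UNIV p" "continuous_on UNIV q"
      using continuous_real_polymonial_function[OF p(1)] continuous_real_polymonial_function[OF q(1)]
      by (auto intro: continuous_at_imp_continuous_on)
    have "continuous_on {0..1} (\<lambda>x. p (ee 1 x))" "continuous_on {0..1} (\<lambda>x. q (ee 1 x))"
      by (intro continuous_on_compose2[OF pc(1) continuous_on_ee] continuous_on_compose2[OF pc(2) continuous_on_ee]; simp)+
    then have cP: "continuous_on {0..1} P" unfolding P by (intro continuous_intros)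
    have int2: "((\<lambda>x. D x * (cnj (D x) - P x)) has_integral integral {0..1} (\<lambda>x. D x * (cnj (D x) - P x))) {0..1}"
      by (intro integrable_integral integrable_continuous_interval continuous_intros cont cP)
    have "((\<lambda>x. D x * (cnj (D x) - P x) + D x * P x) has_integral integral {0..1} (\<lambda>x. D x * (cnj (D x) - P x)) + 0) {0..1}"
      by (rule has_integral_add[OF int2 hP])
    moreover have "D x * (cnj (D x) - P x) + D x * P x = complex_of_real (g x)" for x
      by (simp only: g_def complex_norm_square) (simp add: algebra_simps)
    ultimately have "((\<lambda>x. complex_of_real (g x)) has_integral integral {0..1} (\<lambda>x. D x * (cnj (D x) - P x))) {0..1}"
      by simp
    moreover have "((\<lambda>x. complex_of_real (g x)) has_integral complex_of_real (integral {0..1} g)) {0..1}"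
      by (rule has_integral_of_real[OF gint])
    ultimately have eqI: "complex_of_real (integral {0..1} g) = integral {0..1} (\<lambda>x. D x * (cnj (D x) - P x))"
      by (rule has_integral_unique[rotated])
    have "norm (integral {0..1} (\<lambda>x. D x * (cnj (D x) - P x))) \<le> B * (2 * e) * Henstock_Kurzweil_Integration.content {0..1::real}"
      by (rule has_integral_bound_real[where S="{}", OF _ _ int2]) (use B e close in auto)
    then have "norm (complex_of_real (integral {0..1} g)) \<le> 2 * B * e" unfolding eqI by simp
    then show ?thesis by simp
  qed
  have g0: "integral {0..1} g = 0"
  proof (rule ccontr)
    assume ne: "integral {0..1} g \<noteq> 0"
    have "integral {0..1} g \<ge> 0"
      by (rule has_integral_nonneg[OF gint]) (simp add: g_def)
    then have pos: "integral {0..1} g > 0" using ne by simp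
    have "integral {0..1} g \<le> 2 * B * (integral {0..1} g / (4 * B))"
      by (rule key) (use pos B in simp)
    also have "\<dots> = integral {0..1} g / 2" using B by simp
    finally show False using pos by simp
  qed
  have zero01: "D y = 0" if y: "y \<in> {0..1}" for y
  proof -
    have "g y = 0"
      by (rule has_integral_0_cbox_imp_0[of 0 1 g])
         (use gcont gint g0 y in \<open>auto simp: g_def\<close>)
    then show ?thesis by (simp add: g_def)
  qed
  have "D x = D (x + of_int (- floor x))" by (rule periodic_int[of D, OF per, symmetric])
  also have "\<dots> = 0" by (rule zero01) (simp add: floor_le_iff, linarith)
  finally show ?thesis .
qed

theorem jacobi:
  assumes A: "A > 0"
  shows "complex_of_real (per A x) = thet A x"
proof -
  define D where "D y = complex_of_real (per A y) - thet A y" for y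
  have cont: "continuous_on {0..1} D" unfolding D_def
    by (intro continuous_intros per_cont[OF A] thet_cont[OF A])
  have per: "D (y + 1) = D y" for y unfolding D_def by (simp add: per_periodic thet_periodic)
  have coeff: "integral {0..1} (\<lambda>y. D y * ee m y) = 0" for m
  proof -
    have "integral {0..1} (\<lambda>y. D y * ee m y) =
      integral {0..1} (\<lambda>y. complex_of_real (per A y) * ee m y) - integral {0..1} (\<lambda>y. thet A y * ee m y)"
      unfolding D_def left_diff_distrib
      by (intro integral_diff integrable_continuous_interval continuous_intros per_cont[OF A] thet_cont[OF A])
    also have "\<dots> = 0" using per_coeff[OF A] thet_coeff[OF A] by simp
    finally show ?thesis .
  qed
  have "D x = 0" by (rule fourier_unique[OF cont per coeff])
  then show ?thesis by (simp add: D_def)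
qed

lemma expo_aux:
  fixes \<mu> \<nu> S X q :: real
  assumes "\<mu> > 0" "\<nu> > 0" "S = \<mu> + \<nu>"
  shows "- X\<^sup>2 / (2 * \<mu>) + - (q - X)\<^sup>2 / (2 * \<nu>) = - q\<^sup>2 / (2 * S) + - (S / (2 * \<mu> * \<nu>)) * (X - \<mu> * q / S)\<^sup>2"
proof -
  have S: "S > 0" using assms by simp
  have "(X - \<mu> * q / S) = (S * X - \<mu> * q) / S" using S by (simp add: field_simps)
  then have "- q\<^sup>2 / (2 * S) + - (S / (2 * \<mu> * \<nu>)) * (X - \<mu> * q / S)\<^sup>2 =
     - q\<^sup>2 / (2 * S) + - (S * X - \<mu> * q)\<^sup>2 / (2 * \<mu> * \<nu> * S)"
    using S assms(1,2) by (simp add: power_divide power2_eq_square field_simps)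
  also have "\<dots> = (- \<mu> * \<nu> * q\<^sup>2 - (S * X - \<mu> * q)\<^sup>2) / (2 * \<mu> * \<nu> * S)"
    using S assms(1,2) by (simp add: field_simps)
  also have "- \<mu> * \<nu> * q\<^sup>2 - (S * X - \<mu> * q)\<^sup>2 = S * (- \<nu> * X\<^sup>2 - \<mu> * (q - X)\<^sup>2)"
    unfolding assms(3) by (simp add: power2_eq_square algebra_simps)
  also have "S * (- \<nu> * X\<^sup>2 - \<mu> * (q - X)\<^sup>2) / (2 * \<mu> * \<nu> * S) = - X\<^sup>2 / (2 * \<mu>) + - (q - X)\<^sup>2 / (2 * \<nu>)"
    using S assms(1,2) by (simp add: field_simps)
  finally show ?thesis ..
qed

lemma const_aux:
  fixes \<mu> \<nu> S G :: real
  assumes "\<mu> > 0" "\<nu> > 0" "S > 0" "G \<noteq> 0"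
  shows "sqrt (2 * pi * \<mu> / G\<^sup>2) / (sqrt (2 * pi * S) * sqrt (pi / (S * G\<^sup>2 / (2 * \<mu> * \<nu>)))) = 1 / sqrt (2 * pi * \<nu>)"
proof -
  have "sqrt (2 * pi * \<mu> / G\<^sup>2) / (sqrt (2 * pi * S) * sqrt (pi / (S * G\<^sup>2 / (2 * \<mu> * \<nu>)))) =
        sqrt ((2 * pi * \<mu> / G\<^sup>2) / ((2 * pi * S) * (pi / (S * G\<^sup>2 / (2 * \<mu> * \<nu>)))))"
    by (simp add: real_sqrt_mult real_sqrt_divide)
  also have "(2 * pi * \<mu> / G\<^sup>2) / ((2 * pi * S) * (pi / (S * G\<^sup>2 / (2 * \<mu> * \<nu>)))) = 1 / (2 * pi * \<nu>)"
    using assms by (simp add: field_simps power2_eq_square)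
  finally show ?thesis by (simp add: real_sqrt_divide)
qed

lemma tau_aux:
  fixes \<mu> \<nu> S G :: real
  assumes "\<mu> > 0" "\<nu> > 0" "S = \<mu> + \<nu>" "G \<noteq> 0"
  shows "pi * \<i> * (2 * pi * \<i> * complex_of_real \<nu> / complex_of_real ((1 + \<nu> / \<mu>) * G\<^sup>2)) =
    complex_of_real (- pi\<^sup>2 / (S * G\<^sup>2 / (2 * \<mu> * \<nu>)))"
proof -
  have S: "S > 0" using assms by simp
  have e: "(1 + \<nu> / \<mu>) * G\<^sup>2 = S * G\<^sup>2 / \<mu>" using assms(1) by (simp add: assms(3) field_simps)
  have "pi * \<i> * (2 * pi * \<i> * complex_of_real \<nu> / complex_of_real ((1 + \<nu> / \<mu>) * G\<^sup>2)) =
     complex_of_real (- (2 * pi * pi * \<nu> / (S * G\<^sup>2 / \<mu>)))"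
    unfolding e by (simp add: field_simps)
  also have "- (2 * pi * pi * \<nu> / (S * G\<^sup>2 / \<mu>)) = - pi\<^sup>2 / (S * G\<^sup>2 / (2 * \<mu> * \<nu>))"
    using S assms(1,2,4) by (simp add: field_simps power2_eq_square)
  finally show ?thesis .
qed

lemma z_aux:
  fixes \<mu> \<nu> S G q :: real
  assumes "\<mu> > 0" "\<nu> > 0" "S = \<mu> + \<nu>" "G \<noteq> 0"
  shows "- q / ((1 + \<nu> / \<mu>) * G) = - (\<mu> * q / (S * G))"
proof -
  have e: "(1 + \<nu> / \<mu>) * G = S * G / \<mu>" using assms(1) by (simp add: assms(3) field_simps)
  show ?thesis unfolding e using assms(1) by simp
qed

theorem lemma1:
  fixes \<mu> \<nu> \<Gamma> :: real and a :: rat and q :: real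
  assumes "\<mu> > 0" and "\<nu> > 0" and "\<Gamma> \<noteq> 0"
  shows "complex_of_real (comb_conv_gauss \<mu> \<Gamma> (of_rat a) \<nu> q) =
    complex_of_real (sqrt (2 * pi * \<mu> / \<Gamma>\<^sup>2) * gauss (\<mu> + \<nu>) q) *
    theta_char 0 (of_rat a)
      (complex_of_real (- q / ((1 + \<nu> / \<mu>) * \<Gamma>)))
      (2 * pi * \<i> * complex_of_real \<nu> / complex_of_real ((1 + \<nu> / \<mu>) * \<Gamma>\<^sup>2))"
proof -
  note mu = \<open>\<mu> > 0\<close> and nu = \<open>\<nu> > 0\<close> and G = \<open>\<Gamma> \<noteq> 0\<close>
  define b :: real where "b = of_rat a"
  define A where "A = (\<mu> + \<nu>) * \<Gamma>\<^sup>2 / (2 * \<mu> * \<nu>)"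
  define c where "c = \<mu> * q / ((\<mu> + \<nu>) * \<Gamma>)"
  define x where "x = b - c"
  define K0 where "K0 = exp (- q\<^sup>2 / (2 * (\<mu> + \<nu>))) / sqrt (2 * pi * \<nu>)"
  have A: "A > 0" using mu nu G by (simp add: A_def)
  have expo: "- (of_int s + b)\<^sup>2 * \<Gamma>\<^sup>2 / (2 * \<mu>) + - (q - (of_int s + b) * \<Gamma>)\<^sup>2 / (2 * \<nu>) =
      - q\<^sup>2 / (2 * (\<mu> + \<nu>)) + - A * (x + of_int s)\<^sup>2" for s :: int
  proof -
    define X where "X = (of_int s + b) * \<Gamma>"
    have S: "\<mu> + \<nu> > 0" using mu nu by simp
    have l1: "- (of_int s + b)\<^sup>2 * \<Gamma>\<^sup>2 / (2 * \<mu>) = - X\<^sup>2 / (2 * \<mu>)"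
      by (simp add: X_def power_mult_distrib)
    have g: "\<Gamma> * (x + of_int s) = X - \<mu> * q / (\<mu> + \<nu>)"
    proof -
      have "\<Gamma> * (\<mu> * q / ((\<mu> + \<nu>) * \<Gamma>)) = \<mu> * q / (\<mu> + \<nu>)" using G by simp
      then show ?thesis unfolding X_def x_def c_def by (simp add: algebra_simps)
    qed
    have "A * (x + of_int s)\<^sup>2 = ((\<mu> + \<nu>) / (2 * \<mu> * \<nu>)) * (\<Gamma> * (x + of_int s))\<^sup>2"
      unfolding A_def by (simp add: power_mult_distrib)
    also have "\<dots> = ((\<mu> + \<nu>) / (2 * \<mu> * \<nu>)) * (X - \<mu> * q / (\<mu> + \<nu>))\<^sup>2" unfolding g ..
    finally have l2: "- A * (x + of_int s)\<^sup>2 = - ((\<mu> + \<nu>) / (2 * \<mu> * \<nu>)) * (X - \<mu> * q / (\<mu> + \<nu>))\<^sup>2"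
      by simp
    show ?thesis unfolding l1 l2 X_def[symmetric]
      by (rule expo_aux[OF mu nu refl])
  qed
  have hterm: "exp (- (of_int s + b)\<^sup>2 * \<Gamma>\<^sup>2 / (2 * \<mu>)) * gauss \<nu> (q - (of_int s + b) * \<Gamma>) =
      K0 * exp (- A * (x + of_int s)\<^sup>2)" for s :: int
  proof -
    have "exp (- (of_int s + b)\<^sup>2 * \<Gamma>\<^sup>2 / (2 * \<mu>)) * gauss \<nu> (q - (of_int s + b) * \<Gamma>) =
      exp (- (of_int s + b)\<^sup>2 * \<Gamma>\<^sup>2 / (2 * \<mu>) + - (q - (of_int s + b) * \<Gamma>)\<^sup>2 / (2 * \<nu>)) / sqrt (2 * pi * \<nu>)"
      unfolding gauss_def exp_add by simp
    also have "\<dots> = K0 * exp (- A * (x + of_int s)\<^sup>2)"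
      unfolding expo K0_def exp_add by simp
    finally show ?thesis .
  qed
  have lhs: "comb_conv_gauss \<mu> \<Gamma> b \<nu> q = K0 * per A x"
    unfolding comb_conv_gauss_def hterm per_def by (rule infsum_cmult_right')
  have S: "\<mu> + \<nu> > 0" using mu nu by simp
  have tau: "pi * \<i> * (2 * pi * \<i> * complex_of_real \<nu> / complex_of_real ((1 + \<nu> / \<mu>) * \<Gamma>\<^sup>2)) =
    complex_of_real (- pi\<^sup>2 / A)"
    unfolding A_def by (rule tau_aux[OF mu nu refl G])
  have zb: "complex_of_real (- q / ((1 + \<nu> / \<mu>) * \<Gamma>)) + complex_of_real b = complex_of_real x"
    unfolding z_aux[OF mu nu refl G] x_def c_def by simp
  have th: "theta_char 0 b (complex_of_real (- q / ((1 + \<nu> / \<mu>) * \<Gamma>)))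
      (2 * pi * \<i> * complex_of_real \<nu> / complex_of_real ((1 + \<nu> / \<mu>) * \<Gamma>\<^sup>2)) =
    (\<Sum>\<^sub>\<infinity>s::int. complex_of_real (exp (- pi\<^sup>2 * (of_int s)\<^sup>2 / A)) * ee s x)"
    unfolding theta_char_def
  proof (intro infsum_cong)
    fix s :: int
    have "pi * \<i> * (2 * pi * \<i> * complex_of_real \<nu> / complex_of_real ((1 + \<nu> / \<mu>) * \<Gamma>\<^sup>2)) *
        (complex_of_real (of_int s + 0))\<^sup>2 +
        2 * pi * \<i> * (complex_of_real (- q / ((1 + \<nu> / \<mu>) * \<Gamma>)) + complex_of_real b) * complex_of_real (of_int s + 0)
      = complex_of_real (- pi\<^sup>2 * (of_int s)\<^sup>2 / A) + \<i> * complex_of_real (2 * pi * of_int s * x)"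
      unfolding tau zb by simp
    then show "exp (pi * \<i> * (2 * pi * \<i> * complex_of_real \<nu> / complex_of_real ((1 + \<nu> / \<mu>) * \<Gamma>\<^sup>2)) *
        (complex_of_real (of_int s + 0))\<^sup>2 +
        2 * pi * \<i> * (complex_of_real (- q / ((1 + \<nu> / \<mu>) * \<Gamma>)) + complex_of_real b) * complex_of_real (of_int s + 0))
      = complex_of_real (exp (- pi\<^sup>2 * (of_int s)\<^sup>2 / A)) * ee s x"
      by (simp only: exp_add ee_def exp_of_real)
  qed
  have thet_eq: "thet A x = complex_of_real (sqrt (pi / A)) *
      (\<Sum>\<^sub>\<infinity>s::int. complex_of_real (exp (- pi\<^sup>2 * (of_int s)\<^sup>2 / A)) * ee s x)"
    unfolding thet_def beta_def infsum_cmult_right'[symmetric] by (simp add: mult.assoc)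
  have sq: "sqrt (pi / A) > 0" using A by simp
  have cst: "K0 = sqrt (2 * pi * \<mu> / \<Gamma>\<^sup>2) * gauss (\<mu> + \<nu>) q / sqrt (pi / A)"
  proof -
    have "sqrt (2 * pi * \<mu> / \<Gamma>\<^sup>2) / (sqrt (2 * pi * (\<mu> + \<nu>)) * sqrt (pi / A)) = 1 / sqrt (2 * pi * \<nu>)"
      unfolding A_def by (rule const_aux[OF mu nu S G])
    note eq = this
    have "K0 = exp (- q\<^sup>2 / (2 * (\<mu> + \<nu>))) * (1 / sqrt (2 * pi * \<nu>))" by (simp add: K0_def)
    also have "\<dots> = exp (- q\<^sup>2 / (2 * (\<mu> + \<nu>))) *
        (sqrt (2 * pi * \<mu> / \<Gamma>\<^sup>2) / (sqrt (2 * pi * (\<mu> + \<nu>)) * sqrt (pi / A)))"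
      unfolding eq ..
    also have "\<dots> = sqrt (2 * pi * \<mu> / \<Gamma>\<^sup>2) * gauss (\<mu> + \<nu>) q / sqrt (pi / A)"
      by (simp add: gauss_def ac_simps)
    finally show ?thesis .
  qed
  have "complex_of_real (comb_conv_gauss \<mu> \<Gamma> b \<nu> q) = complex_of_real K0 * thet A x"
    unfolding lhs jacobi[OF A, symmetric] by simp
  also have "\<dots> = complex_of_real (sqrt (2 * pi * \<mu> / \<Gamma>\<^sup>2) * gauss (\<mu> + \<nu>) q) *
      (\<Sum>\<^sub>\<infinity>s::int. complex_of_real (exp (- pi\<^sup>2 * (of_int s)\<^sup>2 / A)) * ee s x)"
    unfolding thet_eq cst using sq A by (simp add: field_simps)
  finally show ?thesis unfolding th[symmetric] b_def .
qed

end
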